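(* $\mathscr{F}_4\supseteq\mathscr{F}_{\mathrm{AIFV}}$.
   Context: $\mathcal{S}$ is a finite source alphabet with $|\mathcal{S}|\ge 2$ and $\mathcal{C}=\{0,1\}$; $\mathcal{A}^k,\mathcal{A}^{\ast},\mathcal{A}^{+}$ are sequences of length $k$, finite, positive finite length; $\lambda$ empty sequence; $\preceq$ prefix, $\prec$ proper prefix; $\mathrm{suff}(x_1\cdots x_n)=x_2\cdots x_n$. A code-tuple $F$ with $m\ge1$ code tables consists of maps $f_i:\mathcal{S}\to\mathcal{C}^{\ast}$ and $\tau_i:\mathcal{S}\to\{0,\dots,m-1\}$, $i\in[F]=\{0,\dots,m-1\}$; $|F|=m$. $f_i^{\ast}(\lambda)=\lambda$, $f_i^{\ast}(\pmb{x})=f_i(x_1)f^{\ast}_{\tau_i(x_1)}(\mathrm{suff}(\pmb{x}))$. For integer $k\ge0$, $\pmb{b}\in\mathcal{C}^{\ast}$: $\mathcal{P}^k_{F,i}(\pmb{b})$ is the set of $\pmb{c}\in\mathcal{C}^k$ such that some $\pmb{x}=x_1\cdots x_n\in\mathcal{S}^{+}$ has $f_i^{\ast}(\pmb{x})\succeq\pmb{b}\pmb{c}$ and $f_i(x_1)\succeq\pmb{b}$; $\bar{\mathcal{P}}^k_{F,i}(\pmb{b})$ the same with $f_i(x_1)\succ\pmb{b}$; $\mathcal{P}^k_{F,i}=\mathcal{P}^k_{F,i}(\lambda)$. $F$ is $2$-bit delay decodable ($F\in\mathscr{F}_{2\text{-}\mathrm{dec}}$) if $\mathcal{P}^2_{F,\tau_i(s)}\cap\bar{\mathcal{P}}^2_{F,i}(f_i(s))=\emptyset$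 for all $i,s$, and $\mathcal{P}^2_{F,\tau_i(s)}\cap\mathcal{P}^2_{F,\tau_i(s')}=\emptyset$ whenever $s\ne s'$, $f_i(s)=f_i(s')$. Fix $\mu:\mathcal{S}\to(0,1]$ with $\sum_s\mu(s)=1$; $Q(F)$ is the $|F|\times|F|$ matrix with $Q_{i,j}(F)=\sum_{s:\tau_i(s)=j}\mu(s)$; $F$ is regular ($F\in\mathscr{F}_{\mathrm{reg}}$) if $\pmb{\pi}Q(F)=\pmb{\pi}$, $\sum_i\pi_i=1$ has a unique solution. $\mathscr{F}_4$ is the set of $F\in\mathscr{F}_{\mathrm{reg}}\cap\mathscr{F}_{2\text{-}\mathrm{dec}}$ with $|F|=2$, $\mathcal{P}^2_{F,0}=\{00,01,10,11\}$ and $\mathcal{P}^2_{F,1}=\{01,10,11\}$. $\mathscr{F}_{\mathrm{AIFV}}$ is the set of code-tuples $F$ with $|F|=2$ satisfying: (i) $f_0,f_1$ injective; (ii) for all $i\in\{0,1\}$, $s$: $1\notin\bar{\mathcal{P}}^1_{F,i}(f_i(s))$ and $1\notin\bar{\mathcal{P}}^1_{F,i}(f_i(s)0)$; (iii) $f_i(s')\ne f_i(s)0$ for all $i,s,s'$; (iv) $\tau_i(s)=0$ if $\bar{\mathcal{P}}^0_{F,i}(f_i(s))=\emptyset$, and $\tau_i(s)=1$ otherwise; (v) $f_1(s)\ne\lambda$ and $f_1(s)\ne0$ for all $s$; (vi) $0\notin\bar{\mathcal{P}}^1_{F,1}(0)$; (vii) for all $i\in\{0,1\}$, $\pmb{b}\in\mathcal{C}^{\ast}$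 with $|\bar{\mathcal{P}}^1_{F,i}(\pmb{b})|=1$: either $f_i(s)\pmb{c}=\pmb{b}$ for some $s\in\mathcal{S}$, $\pmb{c}\in\mathcal{C}^0\cup\mathcal{C}^1$, or $(i,\pmb{b})=(1,0)$. *)

theory Defs
  imports Complex_Main "HOL-Library.Sublist"
begin

text \<open>Code alphabet C = {0,1} is represented by bool: False = 0, True = 1.
  A code-tuple F with m tables is given by m, f :: nat => 'a => bool list and
  tau :: nat => 'a => nat; only the tables i < m are meaningful.\<close>

definition code_tuple :: "nat \<Rightarrow> (nat \<Rightarrow> 'a \<Rightarrow> bool list) \<Rightarrow> (nat \<Rightarrow> 'a \<Rightarrow> nat) \<Rightarrow> bool" where
  "code_tuple m f \<tau> \<longleftrightarrow> m \<ge> 1 \<and> (\<forall>i<m. \<forall>s. \<tau> i s < m)"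

fun fstar :: "(nat \<Rightarrow> 'a \<Rightarrow> bool list) \<Rightarrow> (nat \<Rightarrow> 'a \<Rightarrow> nat) \<Rightarrow> nat \<Rightarrow> 'a list \<Rightarrow> bool list" where
  "fstar f \<tau> i [] = []"
| "fstar f \<tau> i (x # xs) = f i x @ fstar f \<tau> (\<tau> i x) xs"

definition Pset :: "(nat \<Rightarrow> 'a \<Rightarrow> bool list) \<Rightarrow> (nat \<Rightarrow> 'a \<Rightarrow> nat) \<Rightarrow> nat \<Rightarrow> nat \<Rightarrow> bool list \<Rightarrow> bool list set" where
  "Pset f \<tau> k i b = {c. length c = k \<and> (\<exists>x. x \<noteq> [] \<and> prefix (b @ c) (fstar f \<tau> i x) \<and> prefix b (f i (hd x)))}"

definition Pbar :: "(nat \<Rightarrow> 'a \<Rightarrow> bool list) \<Rightarrow> (nat \<Rightarrow> 'a \<Rightarrow> nat) \<Rightarrow> nat \<Rightarrow> nat \<Rightarrow> bool list \<Rightarrow> bool list set" where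
  "Pbar f \<tau> k i b = {c. length c = k \<and> (\<exists>x. x \<noteq> [] \<and> prefix (b @ c) (fstar f \<tau> i x) \<and> strict_prefix b (f i (hd x)))}"

definition two_bit_delay_dec :: "nat \<Rightarrow> (nat \<Rightarrow> 'a \<Rightarrow> bool list) \<Rightarrow> (nat \<Rightarrow> 'a \<Rightarrow> nat) \<Rightarrow> bool" where
  "two_bit_delay_dec m f \<tau> \<longleftrightarrow>
     (\<forall>i<m. \<forall>s. Pset f \<tau> 2 (\<tau> i s) [] \<inter> Pbar f \<tau> 2 i (f i s) = {}) \<and>
     (\<forall>i<m. \<forall>s s'. s \<noteq> s' \<and> f i s = f i s' \<longrightarrow> Pset f \<tau> 2 (\<tau> i s) [] \<inter> Pset f \<tau> 2 (\<tau> i s') [] = {})"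

definition Qmat :: "('a::finite \<Rightarrow> real) \<Rightarrow> (nat \<Rightarrow> 'a \<Rightarrow> nat) \<Rightarrow> nat \<Rightarrow> nat \<Rightarrow> real" where
  "Qmat \<mu> \<tau> i j = (\<Sum>s\<in>{s. \<tau> i s = j}. \<mu> s)"

text \<open>Regularity: pi Q = pi, sum pi = 1 has a unique solution pi in R^m
  (vectors in R^m represented as functions nat => real vanishing outside {0..<m}).\<close>
definition regular :: "('a::finite \<Rightarrow> real) \<Rightarrow> nat \<Rightarrow> (nat \<Rightarrow> 'a \<Rightarrow> nat) \<Rightarrow> bool" where
  "regular \<mu> m \<tau> \<longleftrightarrow> (\<exists>!\<pi>::nat \<Rightarrow> real. (\<forall>i\<ge>m. \<pi> i = 0) \<and>
      (\<forall>j<m. (\<Sum>i<m. \<pi> i * Qmat \<mu> \<tau> i j) = \<pi> j) \<and> (\<Sum>i<m. \<pi> i) = 1)"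

definition in_F4 :: "('a::finite \<Rightarrow> real) \<Rightarrow> nat \<Rightarrow> (nat \<Rightarrow> 'a \<Rightarrow> bool list) \<Rightarrow> (nat \<Rightarrow> 'a \<Rightarrow> nat) \<Rightarrow> bool" where
  "in_F4 \<mu> m f \<tau> \<longleftrightarrow> code_tuple m f \<tau> \<and> regular \<mu> m \<tau> \<and> two_bit_delay_dec m f \<tau> \<and> m = 2 \<and>
     Pset f \<tau> 2 0 [] = {[False,False],[False,True],[True,False],[True,True]} \<and>
     Pset f \<tau> 2 1 [] = {[False,True],[True,False],[True,True]}"

definition in_AIFV :: "nat \<Rightarrow> (nat \<Rightarrow> 'a \<Rightarrow> bool list) \<Rightarrow> (nat \<Rightarrow> 'a \<Rightarrow> nat) \<Rightarrow> bool" where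
  "in_AIFV m f \<tau> \<longleftrightarrow> code_tuple m f \<tau> \<and> m = 2 \<and>
     inj (f 0) \<and> inj (f 1) \<and>
     (\<forall>i<2. \<forall>s. [True] \<notin> Pbar f \<tau> 1 i (f i s) \<and> [True] \<notin> Pbar f \<tau> 1 i (f i s @ [False])) \<and>
     (\<forall>i<2. \<forall>s s'. f i s' \<noteq> f i s @ [False]) \<and>
     (\<forall>i<2. \<forall>s. \<tau> i s = (if Pbar f \<tau> 0 i (f i s) = {} then 0 else 1)) \<and>
     (\<forall>s. f 1 s \<noteq> [] \<and> f 1 s \<noteq> [False]) \<and>
     [False] \<notin> Pbar f \<tau> 1 1 [False] \<and>
     (\<forall>i<2. \<forall>b. card (Pbar f \<tau> 1 i b) = 1 \<longrightarrow>
        (\<exists>s c. length c \<le> 1 \<and> f i s @ c = b) \<or> (i = 1 \<and> b = [False]))"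

end

theory Submission
  imports Defs
begin

lemma prefix_app_len:
  assumes "prefix xs (ys @ zs)" "length xs \<le> length ys"
  shows "prefix xs ys"
  using assms unfolding prefix_append by auto

lemma prefix_eq_len:
  assumes "prefix a w" "prefix b w" "length a = length b"
  shows "a = b"
proof -
  have h: "prefix u v \<Longrightarrow> length u = length v \<Longrightarrow> u = v" for u v :: "'a list"
    by (auto simp: prefix_def)
  show ?thesis using prefix_same_cases[OF assms(1,2)] h assms(3) by metis
qed

lemma pbar1_iff:
  "c \<in> Pbar f \<tau> 1 i b \<longleftrightarrow> (\<exists>a. c = [a] \<and> (\<exists>s. prefix (b @ [a]) (f i s)))"
proof
  assume "c \<in> Pbar f \<tau> 1 i b"
  then obtain x where x: "length c = 1" "x \<noteq> []" "prefix (b @ c) (fstar f \<tau> i x)"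
    "strict_prefix b (f i (hd x))" unfolding Pbar_def by auto
  then obtain s xs where sx: "x = s # xs" by (cases x) auto
  obtain a where a: "c = [a]" using x(1) by (cases c) auto
  have "length b < length (f i s)" using x(4) sx by (simp add: prefix_length_less)
  moreover have "prefix (b @ [a]) (f i s @ fstar f \<tau> (\<tau> i s) xs)"
    using x(3) sx a by simp
  ultimately have "prefix (b @ [a]) (f i s)"
    using prefix_app_len by fastforce
  then show "\<exists>a. c = [a] \<and> (\<exists>s. prefix (b @ [a]) (f i s))" using a by blast
next
  assume "\<exists>a. c = [a] \<and> (\<exists>s. prefix (b @ [a]) (f i s))"
  then obtain a s where a: "c = [a]" "prefix (b @ [a]) (f i s)" by blast
  have "strict_prefix b (f i s)"
  proof -
    have "strict_prefix b (b @ [a])" by (simp add: strict_prefix_def)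
    then show ?thesis using a(2) prefix_order.less_le_trans by blast
  qed
  moreover have "prefix (b @ c) (fstar f \<tau> i [s])" using a by simp
  ultimately show "c \<in> Pbar f \<tau> 1 i b" unfolding Pbar_def using a
    by (intro CollectI conjI exI[where x="[s]"]) auto
qed

lemma pbar0_iff:
  "Pbar f \<tau> 0 i b = {} \<longleftrightarrow> \<not>(\<exists>s. strict_prefix b (f i s))"
proof
  assume h: "Pbar f \<tau> 0 i b = {}"
  show "\<not>(\<exists>s. strict_prefix b (f i s))"
  proof
    assume "\<exists>s. strict_prefix b (f i s)"
    then obtain s where "strict_prefix b (f i s)" by blast
    then have "[] \<in> Pbar f \<tau> 0 i b" unfolding Pbar_def
      by (auto intro!: exI[where x="[s]"])
    then show False using h by auto
  qed
next
  assume "\<not>(\<exists>s. strict_prefix b (f i s))"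
  then show "Pbar f \<tau> 0 i b = {}" unfolding Pbar_def by auto
qed


theorem lemma11:
  fixes \<mu> :: "'a::finite \<Rightarrow> real"
    and m :: nat and f :: "nat \<Rightarrow> 'a \<Rightarrow> bool list" and \<tau> :: "nat \<Rightarrow> 'a \<Rightarrow> nat"
  assumes "card (UNIV :: 'a set) \<ge> 2"
    and "\<forall>s. 0 < \<mu> s \<and> \<mu> s \<le> 1"
    and "(\<Sum>s\<in>UNIV. \<mu> s) = 1"
    and "in_AIFV m f \<tau>"
  shows "in_F4 \<mu> m f \<tau>"
proof -
  note A = assms(4)[unfolded in_AIFV_def]
  have m2: "m = 2" using A by blast
  have ct: "code_tuple m f \<tau>" using A by blast
  have tlt: "\<And>i s. i < 2 \<Longrightarrow> \<tau> i s < 2" using ct m2 unfolding code_tuple_def by auto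
  have inj0: "inj (f 0)" and inj1: "inj (f 1)" using A by auto
  have H2a: "\<And>i s s'. i < 2 \<Longrightarrow> \<not> prefix (f i s @ [True]) (f i s')"
  proof -
    fix i s s' assume "(i::nat) < 2"
    then have "[True] \<notin> Pbar f \<tau> 1 i (f i s)" using A by blast
    then show "\<not> prefix (f i s @ [True]) (f i s')" unfolding pbar1_iff by blast
  qed
  have H2b: "\<And>i s s'. i < 2 \<Longrightarrow> \<not> prefix (f i s @ [False, True]) (f i s')"
  proof -
    fix i s s' assume "(i::nat) < 2"
    then have "[True] \<notin> Pbar f \<tau> 1 i (f i s @ [False])" using A by blast
    then show "\<not> prefix (f i s @ [False, True]) (f i s')" unfolding pbar1_iff by auto
  qed
  have H3: "\<And>i s s'. i < 2 \<Longrightarrow> f i s' \<noteq> f i s @ [False]" using A by blast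
  have H4: "\<And>i s. i < 2 \<Longrightarrow> \<tau> i s = (if \<exists>s'. strict_prefix (f i s) (f i s') then 1 else 0)"
  proof -
    fix i s assume "(i::nat) < 2"
    then have "\<tau> i s = (if Pbar f \<tau> 0 i (f i s) = {} then 0 else 1)" using A by blast
    then show "\<tau> i s = (if \<exists>s'. strict_prefix (f i s) (f i s') then 1 else 0)"
      unfolding pbar0_iff by auto
  qed
  have H5: "\<And>s. f 1 s \<noteq> [] \<and> f 1 s \<noteq> [False]" using A by blast
  have H6: "\<And>s. \<not> prefix [False, False] (f 1 s)"
  proof -
    fix s
    have "[False] \<notin> Pbar f \<tau> 1 1 [False]" using A by blast
    then show "\<not> prefix [False, False] (f 1 s)" unfolding pbar1_iff by auto
  qed
  have H7raw: "\<And>i b. i < 2 \<Longrightarrow> card (Pbar f \<tau> 1 i b) = 1 \<Longrightarrow>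
        (\<exists>s c. length c \<le> 1 \<and> f i s @ c = b) \<or> (i = 1 \<and> b = [False])"
    using A by blast
  have H7: "\<And>i b a. i < 2 \<Longrightarrow> \<exists>s. prefix (b @ [a]) (f i s) \<Longrightarrow>
      (\<exists>s. prefix (b @ [\<not> a]) (f i s)) \<or> (\<exists>s c. length c \<le> 1 \<and> f i s @ c = b) \<or> (i = 1 \<and> b = [False])"
  proof -
    fix i b a assume i: "(i::nat) < 2" and ex: "\<exists>s. prefix (b @ [a]) (f i s)"
    show "(\<exists>s. prefix (b @ [\<not> a]) (f i s)) \<or> (\<exists>s c. length c \<le> 1 \<and> f i s @ c = b) \<or> (i = 1 \<and> b = [False])"
    proof (cases "\<exists>s. prefix (b @ [\<not> a]) (f i s)")
      case True then show ?thesis by blast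
    next
      case False
      have "Pbar f \<tau> 1 i b = {[a]}"
      proof (rule set_eqI)
        fix c
        show "c \<in> Pbar f \<tau> 1 i b \<longleftrightarrow> c \<in> {[a]}"
        proof -
          have "\<forall>s a'. prefix (b @ [a']) (f i s) \<longrightarrow> a' = a"
          proof (intro allI impI)
            fix s a' assume "prefix (b @ [a']) (f i s)"
            moreover have "a' = a \<or> a' = (\<not> a)" by auto
            ultimately show "a' = a" using False by blast
          qed
          then show ?thesis unfolding pbar1_iff using ex by auto
        qed
      qed
      then have "card (Pbar f \<tau> 1 i b) = 1" by simp
      then show ?thesis using H7raw[OF i] by blast
    qed
  qed
  have SE: "\<And>i s s'. i < 2 \<Longrightarrow> strict_prefix (f i s) (f i s') \<Longrightarrow> prefix (f i s @ [False, False]) (f i s')"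
  proof -
    fix i s s' assume i: "(i::nat) < 2" and sp: "strict_prefix (f i s) (f i s')"
    then obtain d where d: "f i s' = f i s @ d" "d \<noteq> []"
      unfolding strict_prefix_def prefix_def by auto
    then obtain a d' where ad: "d = a # d'" by (cases d) auto
    show "prefix (f i s @ [False, False]) (f i s')"
    proof (cases a)
      case True
      then have "prefix (f i s @ [True]) (f i s')" using d ad by simp
      then show ?thesis using H2a[OF i] by blast
    next
      case False
      show ?thesis
      proof (cases d')
        case Nil
        then show ?thesis using H3[OF i, of s' s] d ad False by simp
      next
        case (Cons a2 r)
        show ?thesis
        proof (cases a2)
          case True
          then have "prefix (f i s @ [False, True]) (f i s')" using d ad False Cons by simp
          then show ?thesis using H2b[OF i] by blast
        next
          case F2: False
          then show ?thesis using d ad False Cons by simp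
        qed
      qed
    qed
  qed
  have C1: "\<And>a. \<exists>s. prefix [a] (f 1 s)"
  proof -
    fix a
    obtain s0 :: 'a where True by blast
    obtain a0 r where ar: "f 1 s0 = a0 # r" using H5[of s0] by (cases "f 1 s0") auto
    have ex0: "\<exists>s. prefix ([] @ [a0]) (f 1 s)" using ar by (intro exI[where x=s0]) simp
    have "(\<exists>s. prefix ([] @ [\<not> a0]) (f 1 s)) \<or> (\<exists>s c. length c \<le> 1 \<and> f 1 s @ c = []) \<or> (1 = (1::nat) \<and> [] = [False])"
      using H7[OF _ ex0] by simp
    then have "\<exists>s. prefix [\<not> a0] (f 1 s)" using H5 by auto
    then show "\<exists>s. prefix [a] (f 1 s)" using ex0 by (cases "a = a0") auto
  qed
  have ne0: "\<exists>s. f 0 s \<noteq> []"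
  proof -
    obtain s1 s2 :: 'a where "s1 \<noteq> s2"
    proof -
      have "\<not> card (UNIV :: 'a set) \<le> Suc 0" using assms(1) by simp
      then show ?thesis using that by (auto simp: card_le_Suc0_iff_eq)
    qed
    then have "f 0 s1 \<noteq> f 0 s2" using inj0 by (meson injD)
    then show ?thesis by metis
  qed
  have FB: "\<And>j a. j < 2 \<Longrightarrow> \<exists>x. x \<noteq> [] \<and> prefix [a] (fstar f \<tau> j x)"
  proof -
    fix j a assume j: "(j::nat) < 2"
    have FB1: "\<exists>x. x \<noteq> [] \<and> prefix [a] (fstar f \<tau> 1 x)" for a
    proof -
      obtain s where "prefix [a] (f 1 s)" using C1 by blast
      then show ?thesis by (intro exI[where x="[s]"]) simp
    qed
    show "\<exists>x. x \<noteq> [] \<and> prefix [a] (fstar f \<tau> j x)"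
    proof (cases "j = 1")
      case True then show ?thesis using FB1 by simp
    next
      case False
      then have j0: "j = 0" using j by simp
      show ?thesis
      proof (cases "\<exists>s. prefix [a] (f 0 s)")
        case True
        then obtain s where "prefix [a] (f 0 s)" by blast
        then show ?thesis using j0 by (intro exI[where x="[s]"]) simp
      next
        case nf: False
        obtain sn where sn: "f 0 sn \<noteq> []" using ne0 by blast
        then obtain a0 r where ar: "f 0 sn = a0 # r" by (cases "f 0 sn") auto
        have ex0: "\<exists>s. prefix ([] @ [a0]) (f 0 s)" using ar by (intro exI[where x=sn]) simp
        have "(\<exists>s. prefix ([] @ [\<not> a0]) (f 0 s)) \<or> (\<exists>s c. length c \<le> 1 \<and> f 0 s @ c = []) \<or> (0 = (1::nat) \<and> [] = [False])"
          using H7[OF _ ex0] by simp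
        moreover have "a = (\<not> a0)" using nf ex0 by (cases a; cases a0) auto
        ultimately obtain s' where s': "f 0 s' = []" using nf by auto
        have "strict_prefix (f 0 s') (f 0 sn)" using s' sn by (simp add: strict_prefix_def)
        then have t: "\<tau> 0 s' = 1" using H4[of 0 s'] by auto
        obtain x1 where x1: "x1 \<noteq> []" "prefix [a] (fstar f \<tau> 1 x1)" using FB1 by blast
        show ?thesis using j0 t s' x1 by (intro exI[where x="s' # x1"]) simp
      qed
    qed
  qed
  have EXT: "\<And>i s a. i < 2 \<Longrightarrow> \<exists>x. x \<noteq> [] \<and> prefix (f i s @ [a]) (fstar f \<tau> i x)"
  proof -
    fix i s a assume i: "(i::nat) < 2"
    obtain x' where x': "x' \<noteq> []" "prefix [a] (fstar f \<tau> (\<tau> i s) x')" using FB tlt[OF i] by blast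
    show "\<exists>x. x \<noteq> [] \<and> prefix (f i s @ [a]) (fstar f \<tau> i x)"
      using x' by (intro exI[where x="s # x'"]) simp
  qed
  have PS: "\<And>i c x. x \<noteq> [] \<Longrightarrow> prefix c (fstar f \<tau> i x) \<Longrightarrow> length c = 2 \<Longrightarrow> c \<in> Pset f \<tau> 2 i []"
    unfolding Pset_def by auto
  have TWO: "\<And>i a1 a2. i < 2 \<Longrightarrow> \<exists>s. prefix [a1] (f i s) \<Longrightarrow> (\<forall>s. f i s \<noteq> []) \<Longrightarrow>
       \<not>(i = 1 \<and> a1 = False) \<Longrightarrow> [a1, a2] \<in> Pset f \<tau> 2 i []"
  proof -
    fix i a1 a2 assume i: "(i::nat) < 2" and ex: "\<exists>s. prefix [a1] (f i s)"
      and ne: "\<forall>s. f i s \<noteq> []" and nx: "\<not>(i = 1 \<and> a1 = False)"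
    show "[a1, a2] \<in> Pset f \<tau> 2 i []"
    proof (cases "\<exists>s. f i s = [a1]")
      case True
      then obtain s where s: "f i s = [a1]" by blast
      obtain x where "x \<noteq> []" "prefix (f i s @ [a2]) (fstar f \<tau> i x)" using EXT[OF i] by blast
      then show ?thesis using s PS by simp
    next
      case nf: False
      obtain s where s: "prefix [a1] (f i s)" using ex by blast
      then obtain a' r where ar: "f i s = a1 # a' # r" using nf
        by (cases "f i s"; cases "tl (f i s)") auto
      have ex': "\<exists>s. prefix ([a1] @ [a']) (f i s)" using ar by (intro exI[where x=s]) simp
      have any: "[a1, a2] \<in> Pset f \<tau> 2 i []" if "prefix [a1, a2] (f i s2)" for s2
        using PS[of "[s2]" "[a1,a2]" i] that by simp
      show ?thesis
      proof (cases "a2 = a'")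
        case True then show ?thesis using any[of s] ar by simp
      next
        case False
        then have a2: "a2 = (\<not> a')" by auto
        have "(\<exists>s. prefix ([a1] @ [\<not> a']) (f i s)) \<or> (\<exists>s c. length c \<le> 1 \<and> f i s @ c = [a1]) \<or> (i = 1 \<and> [a1] = [False])"
          using H7[OF i ex'] .
        moreover have "\<not> (\<exists>s c. length c \<le> 1 \<and> f i s @ c = [a1])"
        proof
          assume "\<exists>s c. length c \<le> 1 \<and> f i s @ c = [a1]"
          then obtain s c where sc: "length c \<le> 1" "f i s @ c = [a1]" by blast
          then show False using nf ne by (cases c) (auto simp: append_eq_Cons_conv)
        qed
        ultimately show ?thesis using nx a2 any by auto
      qed
    qed
  qed
  have P1: "Pset f \<tau> 2 1 [] = {[False, True], [True, False], [True, True]}"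
  proof (rule set_eqI, rule iffI)
    fix c assume "c \<in> Pset f \<tau> 2 1 []"
    then obtain x where x: "length c = 2" "x \<noteq> []" "prefix c (fstar f \<tau> 1 x)" unfolding Pset_def by auto
    then obtain s xs where sx: "x = s # xs" by (cases x) auto
    obtain c1 c2 where c: "c = [c1, c2]" using x(1)
      by (cases c; cases "tl c") auto
    have pc: "prefix [c1, c2] (f 1 s @ fstar f \<tau> (\<tau> 1 s) xs)" using x(3) sx c by simp
    have "\<not> (c1 = False \<and> c2 = False)"
    proof (cases "f 1 s")
      case Nil then show ?thesis using H5[of s] by simp
    next
      case (Cons a r)
      show ?thesis
      proof (cases r)
        case Nil then show ?thesis using H5[of s] Cons pc by (cases a) auto
      next
        case (Cons b r')
        then show ?thesis using H6[of s] \<open>f 1 s = a # r\<close> pc by auto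
      qed
    qed
    then show "c \<in> {[False, True], [True, False], [True, True]}" using c by (cases c1; cases c2) auto
  next
    fix c assume c: "c \<in> {[False, True], [True, False], [True, True]}"
    have ne1: "\<forall>s. f 1 s \<noteq> []" using H5 by blast
    have FT: "[False, True] \<in> Pset f \<tau> 2 1 []"
    proof -
      obtain s where s: "prefix [False] (f 1 s)" using C1 by blast
      then obtain r where r: "f 1 s = False # r" by (cases "f 1 s") auto
      then obtain b r' where "r = b # r'" using H5[of s] by (cases r) auto
      then have "f 1 s = False # True # r'" using H6[of s] r by (cases b) auto
      then show ?thesis using PS[of "[s]" "[False, True]" 1] by simp
    qed
    have "[True, a2] \<in> Pset f \<tau> 2 1 []" for a2 using TWO[of 1 True a2] C1 ne1 by simp
    then show "c \<in> Pset f \<tau> 2 1 []" using c FT by auto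
  qed
  have P0: "Pset f \<tau> 2 0 [] = {[False, False], [False, True], [True, False], [True, True]}"
  proof (rule set_eqI, rule iffI)
    fix c assume "c \<in> Pset f \<tau> 2 0 []"
    then have "length c = 2" unfolding Pset_def by auto
    then obtain c1 c2 where c: "c = [c1, c2]" by (cases c; cases "tl c") auto
    then show "c \<in> {[False, False], [False, True], [True, False], [True, True]}"
      by (cases c1; cases c2) auto
  next
    fix c assume c: "c \<in> {[False, False], [False, True], [True, False], [True, True]}"
    show "c \<in> Pset f \<tau> 2 0 []"
    proof (cases "\<exists>s0. f 0 s0 = []")
      case True
      then obtain s0 where s0: "f 0 s0 = []" by blast
      obtain sn where sn: "f 0 sn \<noteq> []" using ne0 by blast
      have sp: "strict_prefix (f 0 s0) (f 0 sn)" using s0 sn by (simp add: strict_prefix_def)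
      then have t: "\<tau> 0 s0 = 1" using H4[of 0 s0] by auto
      have "prefix [False, False] (f 0 sn)" using SE[of 0 s0 sn] sp s0 by simp
      then have FF: "[False, False] \<in> Pset f \<tau> 2 0 []" using PS[of "[sn]" "[False, False]" 0] by simp
      have "d \<in> Pset f \<tau> 2 0 []" if d: "d \<in> Pset f \<tau> 2 1 []" for d
      proof -
        obtain x1 where x1: "length d = 2" "x1 \<noteq> []" "prefix d (fstar f \<tau> 1 x1)"
          using d unfolding Pset_def by auto
        then show ?thesis using PS[of "s0 # x1" d 0] s0 t by simp
      qed
      then show ?thesis using c FF P1 by auto
    next
      case False
      then have ne: "\<forall>s. f 0 s \<noteq> []" by blast
      obtain sn where sn: "f 0 sn \<noteq> []" using ne0 by blast
      then obtain a0 r where ar: "f 0 sn = a0 # r" by (cases "f 0 sn") auto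
      have ex0: "\<exists>s. prefix ([] @ [a0]) (f 0 s)" using ar by (intro exI[where x=sn]) simp
      have "(\<exists>s. prefix ([] @ [\<not> a0]) (f 0 s)) \<or> (\<exists>s c. length c \<le> 1 \<and> f 0 s @ c = []) \<or> (0 = (1::nat) \<and> [] = [False])"
        using H7[OF _ ex0] by simp
      then have "\<exists>s. prefix [\<not> a0] (f 0 s)" using ne by auto
      then have all: "\<exists>s. prefix [a] (f 0 s)" for a using ex0 by (cases "a = a0") auto
      have "[a1, a2] \<in> Pset f \<tau> 2 0 []" for a1 a2 using TWO[of 0 a1 a2] all ne by simp
      then show ?thesis using c by auto
    qed
  qed
  have DEC: "two_bit_delay_dec m f \<tau>"
    unfolding two_bit_delay_dec_def m2
  proof (intro conjI allI impI)
    fix i s assume i: "(i::nat) < 2"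
    show "Pset f \<tau> 2 (\<tau> i s) [] \<inter> Pbar f \<tau> 2 i (f i s) = {}"
    proof (cases "\<exists>s'. strict_prefix (f i s) (f i s')")
      case False
      then show ?thesis unfolding Pbar_def by blast
    next
      case True
      then have t: "\<tau> i s = 1" using H4[OF i] by simp
      have "c \<notin> Pbar f \<tau> 2 i (f i s)" if cP: "c \<in> Pset f \<tau> 2 1 []" for c
      proof
        assume "c \<in> Pbar f \<tau> 2 i (f i s)"
        then obtain x where x: "length c = 2" "x \<noteq> []" "prefix (f i s @ c) (fstar f \<tau> i x)"
          "strict_prefix (f i s) (f i (hd x))" unfolding Pbar_def by auto
        then obtain s' xs where sx: "x = s' # xs" by (cases x) auto
        have "prefix (f i s @ [False, False]) (f i s')" using SE[OF i] x(4) sx by simp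
        moreover have "prefix (f i s') (fstar f \<tau> i x)" using sx by simp
        ultimately have "prefix (f i s @ [False, False]) (fstar f \<tau> i x)"
          using prefix_order.trans by blast
        moreover have "length (f i s @ [False, False]) = length (f i s @ c)" using x(1) by simp
        ultimately have "f i s @ [False, False] = f i s @ c" using prefix_eq_len x(3) by blast
        then have "c = [False, False]" by simp
        then show False using cP P1 by auto
      qed
      then show ?thesis using t by auto
    qed
  next
    fix i s s' assume i: "(i::nat) < 2" and h: "s \<noteq> s' \<and> f i s = f i s'"
    have "i = 0 \<or> i = 1" using i by auto
    then have "inj (f i)" using inj0 inj1 by auto
    then have False using h unfolding inj_def by blast
    then show "Pset f \<tau> 2 (\<tau> i s) [] \<inter> Pset f \<tau> 2 (\<tau> i s') [] = {}" by blast
  qed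
  have mupos: "\<And>s. 0 < \<mu> s" using assms(2) by blast
  have Qsum: "Qmat \<mu> \<tau> i 0 + Qmat \<mu> \<tau> i 1 = 1" if i: "(i::nat) < 2" for i
  proof -
    have "{s. \<tau> i s = 1} = UNIV - {s. \<tau> i s = 0}" using tlt[OF i] by (auto simp: less_2_cases_iff) (metis less_2_cases_iff not_gr_zero)
    then have "Qmat \<mu> \<tau> i 1 = (\<Sum>s\<in>UNIV. \<mu> s) - Qmat \<mu> \<tau> i 0"
      unfolding Qmat_def by (simp add: sum_diff)
    then show ?thesis using assms(3) by simp
  qed
  have Qnn: "0 \<le> Qmat \<mu> \<tau> i j" for i j
    unfolding Qmat_def using mupos by (simp add: sum_nonneg less_imp_le)
  have Q10: "0 < Qmat \<mu> \<tau> 1 0"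
  proof -
    define L where "L = Max (range (\<lambda>s. length (f 1 s)))"
    have "L \<in> range (\<lambda>s. length (f 1 s))" unfolding L_def by (intro Max_in) auto
    then obtain s where s: "length (f 1 s) = L" by auto
    have "\<not> strict_prefix (f 1 s) (f 1 s')" for s'
    proof
      assume "strict_prefix (f 1 s) (f 1 s')"
      then have "length (f 1 s) < length (f 1 s')" by (rule prefix_length_less)
      moreover have "length (f 1 s') \<le> L" unfolding L_def by (intro Max_ge) auto
      ultimately show False using s by simp
    qed
    then have "\<tau> 1 s = 0" using H4[of 1 s] by auto
    then have "\<mu> s \<le> Qmat \<mu> \<tau> 1 0" unfolding Qmat_def
      by (intro member_le_sum) (auto simp: mupos less_imp_le)
    then show ?thesis using mupos[of s] by simp
  qed
  have REG: "regular \<mu> m \<tau>"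
  proof -
    define a where "a = Qmat \<mu> \<tau> 0 1"
    define b where "b = Qmat \<mu> \<tau> 1 0"
    have a0: "0 \<le> a" unfolding a_def by (rule Qnn)
    have b0: "0 < b" unfolding b_def by (rule Q10)
    have q00: "Qmat \<mu> \<tau> 0 0 = 1 - a" using Qsum[of 0] unfolding a_def by simp
    have q11: "Qmat \<mu> \<tau> 1 1 = 1 - b" using Qsum[of 1] unfolding b_def by simp
    have ab: "0 < a + b" using a0 b0 by simp
    have s2: "(\<Sum>i<(2::nat). g i) = g 0 + g 1" for g :: "nat \<Rightarrow> real"
      by (simp add: numeral_2_eq_2)
    define p where "p = (\<lambda>i::nat. if i = 0 then b / (a + b) else if i = 1 then a / (a + b) else 0)"
    show ?thesis unfolding regular_def m2
    proof (rule ex1I[where a = p])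
      show "(\<forall>i\<ge>2. p i = 0) \<and> (\<forall>j<2. (\<Sum>i<2. p i * Qmat \<mu> \<tau> i j) = p j) \<and> (\<Sum>i<2. p i) = 1"
      proof (intro conjI allI impI)
        fix i :: nat assume "2 \<le> i" then show "p i = 0" unfolding p_def by simp
      next
        fix j :: nat assume "j < 2"
        then have "j = 0 \<or> j = 1" by auto
        then show "(\<Sum>i<2. p i * Qmat \<mu> \<tau> i j) = p j"
        proof
          assume j: "j = 0"
          have "b / (a + b) * (1 - a) + a / (a + b) * b = (b * (1 - a) + a * b) / (a + b)"
            by (simp add: add_divide_distrib)
          also have "\<dots> = b / (a + b)" by (simp add: algebra_simps)
          finally show ?thesis unfolding s2 j p_def q00 b_def[symmetric] by simp
        next
          assume j: "j = 1"
          have "b / (a + b) * a + a / (a + b) * (1 - b) = (b * a + a * (1 - b)) / (a + b)"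
            by (simp add: add_divide_distrib)
          also have "\<dots> = a / (a + b)" by (simp add: algebra_simps)
          finally show ?thesis unfolding s2 j p_def q11 a_def[symmetric] by simp
        qed
      next
        have "b / (a + b) + a / (a + b) = (b + a) / (a + b)" by (simp add: add_divide_distrib)
        also have "\<dots> = 1" using ab by (simp add: add.commute)
        finally show "(\<Sum>i<2. p i) = 1" unfolding s2 p_def by simp
      qed
    next
      fix q assume q: "(\<forall>i\<ge>2. q i = (0::real)) \<and> (\<forall>j<2. (\<Sum>i<2. q i * Qmat \<mu> \<tau> i j) = q j) \<and> (\<Sum>i<2. q i) = 1"
      from q have qa: "\<forall>i\<ge>2. q i = 0" and qb: "\<forall>j<2. (\<Sum>i<2. q i * Qmat \<mu> \<tau> i j) = q j"
        and qc: "(\<Sum>i<2. q i) = 1" by blast+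
      have "(\<Sum>i<2. q i * Qmat \<mu> \<tau> i 0) = q 0" using qb[rule_format, of 0] by simp
      then have "q 0 * Qmat \<mu> \<tau> 0 0 + q 1 * Qmat \<mu> \<tau> 1 0 = q 0" by (simp only: s2)
      then have e0: "q 0 * (1 - a) + q 1 * b = q 0" by (simp only: q00 b_def[symmetric])
      have e1: "q 0 + q 1 = 1" using qc by (simp only: s2)
      have x1: "q 0 * (1 - a) = q 0 - q 0 * a" by (simp add: right_diff_distrib)
      have x2: "q 1 = 1 - q 0" using e1 by simp
      have x3: "q 1 * b = b - q 0 * b" unfolding x2 by (simp add: left_diff_distrib)
      have x4: "q 0 * (a + b) = q 0 * a + q 0 * b" by (simp add: distrib_left)
      have "q 0 * (a + b) = b" using e0 x1 x3 x4 by linarith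
      then have Q0: "q 0 = b / (a + b)" using ab by (simp add: eq_divide_eq)
      have "1 - b / (a + b) = (a + b) / (a + b) - b / (a + b)" using ab by simp
      also have "\<dots> = (a + b - b) / (a + b)" by (rule diff_divide_distrib[symmetric])
      also have "\<dots> = a / (a + b)" by simp
      finally have "1 - b / (a + b) = a / (a + b)" .
      then have Q1: "q 1 = a / (a + b)" using Q0 x2 by simp
      show "q = p"
      proof
        fix i
        show "q i = p i"
        proof -
          consider "i = 0" | "i = 1" | "2 \<le> i" by linarith
          then show ?thesis
          proof cases
            case 1 then show ?thesis using Q0 unfolding p_def by simp
          next
            case 2 then show ?thesis using Q1 unfolding p_def by simp
          next
            case 3 then show ?thesis using qa unfolding p_def by simp
          qed
        qed
      qed
    qed
  qed
  show ?thesis unfolding in_F4_def using ct REG DEC m2 P0 P1 by simp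
qed

end
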